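(* Let $N\ge1$, $k\in\mathbb{Z}$, $m\in\mathbb{Z}_{>0}$, $\Gamma\in\{\Gamma_0(N),\Gamma_1(N)\}$, and let $\psi\in J^N_{k,\frac mN}(\Gamma)$ be meromorphic with (at most) double poles at $z=z_s=\alpha\tau+\beta$ for $s=(\alpha,\beta)\in S(\psi)\subset\mathbb{Q}^2$. Then for all $\gamma=\begin{pmatrix}a&b\\c&d\end{pmatrix}\in\Gamma$: $E_s(\frac{a\tau+b}{c\tau+d})=(c\tau+d)^{k-2}E_{s\gamma}(\tau)$ and $D_s(\frac{a\tau+b}{c\tau+d})=(c\tau+d)^{k-1}D_{s\gamma}(\tau)$, where $s\gamma=(a\alpha+c\beta,b\alpha+d\beta)$.
   Context: $\mathbf{e}(t)=e^{2\pi it}$. $\Gamma_0(N)$: $c\equiv0\bmod N$; $\Gamma_1(N)$: also $a\equiv d\equiv1\bmod N$. $J^N_{k,\frac mN}(\Gamma)$: functions $\psi$ on $\mathbb{H}\times\mathbb{C}$ with $\psi(\frac{a\tau+b}{c\tau+d},\frac z{c\tau+d})=(c\tau+d)^k\mathbf{e}(\frac mN\frac{cz^2}{c\tau+d})\psi(\tau,z)$ for $\gamma\in\Gamma$ and $\psi(\tau,z+\lambda\tau+\mu)=\mathbf{e}(-\frac mN(\lambda^2\tau+2\lambda z+\lambda\mu))\psi(\tau,z)$ for $(\lambda,\mu)\in N\mathbb{Z}\times\mathbb{Z}$. The residues $D_s,E_s$ are defined by $\mathbf{e}(\frac mN\alpha z_s)\psi(\tau,z_s+\varepsilon)=\frac{E_s(\tau)}{(2\pi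 i\varepsilon)^2}+\frac{D_s(\tau)-2\frac mN\alpha E_s(\tau)}{2\pi i\varepsilon}+O(1)$ as $\varepsilon\to0$. *)

theory Defs
  imports "HOL-Complex_Analysis.Complex_Analysis" "HOL-Number_Theory.Cong"
begin

definition ee :: "complex \<Rightarrow> complex" where
  "ee t = exp (2 * of_real pi * \<i> * t)"

definition upper_half_plane :: "complex set" where
  "upper_half_plane = {\<tau>. Im \<tau> > 0}"

text \<open>Matrices (a,b,c,d) stand for [[a,b],[c,d]].\<close>
definition Gamma0 :: "nat \<Rightarrow> (int \<times> int \<times> int \<times> int) set" where
  "Gamma0 N = {(a,b,c,d). a * d - b * c = 1 \<and> [c = 0] (mod int N)}"

definition Gamma1 :: "nat \<Rightarrow> (int \<times> int \<times> int \<times> int) set" where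
  "Gamma1 N = {(a,b,c,d). a * d - b * c = 1 \<and> [c = 0] (mod int N)
                 \<and> [a = 1] (mod int N) \<and> [d = 1] (mod int N)}"

definition moebius :: "int \<times> int \<times> int \<times> int \<Rightarrow> complex \<Rightarrow> complex" where
  "moebius g \<tau> = (case g of (a,b,c,d) \<Rightarrow> (of_int a * \<tau> + of_int b) / (of_int c * \<tau> + of_int d))"

definition cfac :: "int \<times> int \<times> int \<times> int \<Rightarrow> complex \<Rightarrow> complex" where
  "cfac g \<tau> = (case g of (a,b,c,d) \<Rightarrow> of_int c * \<tau> + of_int d)"

definition zpt :: "rat \<times> rat \<Rightarrow> complex \<Rightarrow> complex" where
  "zpt s \<tau> = of_rat (fst s) * \<tau> + of_rat (snd s)"

definition ract :: "rat \<times> rat \<Rightarrow> int \<times> int \<times> int \<times> int \<Rightarrow> rat \<times> rat" where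
  "ract s g = (case g of (a,b,c,d) \<Rightarrow>
      (of_int a * fst s + of_int c * snd s, of_int b * fst s + of_int d * snd s))"

definition poles :: "(rat \<times> rat) set \<Rightarrow> complex \<Rightarrow> complex set" where
  "poles S \<tau> = (\<lambda>s. zpt s \<tau>) ` S"

text \<open>The transformation laws are required
  wherever both sides are evaluated away from poles.\<close>
definition mero_jacobi :: "nat \<Rightarrow> int \<Rightarrow> int \<Rightarrow> (int \<times> int \<times> int \<times> int) set
     \<Rightarrow> (rat \<times> rat) set \<Rightarrow> (complex \<Rightarrow> complex \<Rightarrow> complex) \<Rightarrow> bool" where
  "mero_jacobi N k m G S \<psi> \<longleftrightarrow>
     (\<forall>\<tau>\<in>upper_half_plane. (\<psi> \<tau>) meromorphic_on UNIV) \<and>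
     (\<forall>\<tau>\<in>upper_half_plane. \<forall>z. z \<notin> poles S \<tau> \<longrightarrow> (\<psi> \<tau>) analytic_on {z}) \<and>
     (\<forall>g\<in>G. \<forall>\<tau>\<in>upper_half_plane. \<forall>z.
        z \<notin> poles S \<tau> \<and> z / cfac g \<tau> \<notin> poles S (moebius g \<tau>) \<longrightarrow>
        \<psi> (moebius g \<tau>) (z / cfac g \<tau>) =
          (cfac g \<tau>) powi k *
          ee (of_int m / of_nat N * (case g of (a,b,c,d) \<Rightarrow> of_int c) * z\<^sup>2 / cfac g \<tau>) *
          \<psi> \<tau> z) \<and>
     (\<forall>l \<mu> :: int. \<forall>\<tau>\<in>upper_half_plane. \<forall>z.
        let lam = of_int (int N * l) :: complex in
        z \<notin> poles S \<tau> \<and> z + lam * \<tau> + of_int \<mu> \<notin> poles S \<tau> \<longrightarrow>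
        \<psi> \<tau> (z + lam * \<tau> + of_int \<mu>) =
          ee (- (of_int m / of_nat N) * (lam\<^sup>2 * \<tau> + 2 * lam * z + lam * of_int \<mu>)) * \<psi> \<tau> z)"

text \<open>E, D are the coefficients of the (at most double) pole expansion at z_s:
  e(m/N alpha z_s) psi(tau, z_s + eps) = E/(2 pi i eps)^2 + (D - 2 m/N alpha E)/(2 pi i eps) + O(1).\<close>
definition pole_expansion :: "nat \<Rightarrow> int \<Rightarrow> (complex \<Rightarrow> complex \<Rightarrow> complex)
     \<Rightarrow> rat \<times> rat \<Rightarrow> complex \<Rightarrow> complex \<Rightarrow> complex \<Rightarrow> bool" where
  "pole_expansion N m \<psi> s \<tau> E D \<longleftrightarrow>
     (let q = of_int m / of_nat N :: complex; \<alpha> = of_rat (fst s) :: complex; zs = zpt s \<tau> in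
      \<exists>C. eventually (\<lambda>\<epsilon>. norm (ee (q * \<alpha> * zs) * \<psi> \<tau> (zs + \<epsilon>)
              - E / (2 * of_real pi * \<i> * \<epsilon>)\<^sup>2
              - (D - 2 * q * \<alpha> * E) / (2 * of_real pi * \<i> * \<epsilon>)) \<le> C) (at 0))"

end

theory Submission
  imports Defs
begin

lemma zero_times_bounded:
  fixes f g :: "'a \<Rightarrow> complex"
  assumes "(f \<longlongrightarrow> 0) F" "eventually (\<lambda>x. norm (g x) \<le> C) F"
  shows "((\<lambda>x. f x * g x) \<longlongrightarrow> 0) F"
proof -
  have "Bfun g F"
    using assms(2) by (intro BfunI) auto
  moreover have "Zfun f F" using assms(1) by (simp add: tendsto_Zfun_iff)
  ultimately have "Zfun (\<lambda>x. f x * g x) F"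
    using bounded_bilinear.Zfun_prod_Bfun[OF bounded_bilinear_mult] by blast
  thus ?thesis by (simp add: tendsto_Zfun_iff)
qed

lemma key_lin:
  fixes X Y :: complex and Sf :: "complex \<Rightarrow> complex"
  assumes "F \<noteq> bot" "eventually (\<lambda>e. e \<noteq> 0 \<and> X + Y*e = e * Sf e) F"
    "(Sf \<longlongrightarrow> 0) F" "((\<lambda>e. e) \<longlongrightarrow> 0) F"
  shows "X = 0 \<and> Y = 0"
proof -
  have h0: "((\<lambda>e. e * Sf e) \<longlongrightarrow> 0 * 0) F" by (intro tendsto_mult assms)
  have ev: "eventually (\<lambda>e. e * Sf e = X + Y*e) F" using assms(2) by (rule eventually_mono) simp
  have h1: "((\<lambda>e. X + Y*e) \<longlongrightarrow> 0) F"
    using tendsto_cong[OF ev] h0 by simp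
  have h2: "((\<lambda>e. X + Y*e) \<longlongrightarrow> X + Y * 0) F" by (intro tendsto_intros assms)
  have X: "X = 0" using tendsto_unique[OF assms(1) h2 h1] by simp
  have ev2: "eventually (\<lambda>e. Sf e = Y) F" using assms(2) by (rule eventually_mono) (auto simp: X)
  have "((\<lambda>e. Y) \<longlongrightarrow> 0) F" using tendsto_cong[OF ev2] assms(3) by simp
  hence "Y = 0" using tendsto_const_iff assms(1) by blast
  with X show ?thesis by simp
qed

lemma im_moebius:
  fixes a b c d :: int and \<tau> :: complex
  assumes "a*d - b*c = 1" "Im \<tau> > 0"
  shows "of_int c * \<tau> + of_int d \<noteq> 0" "Im ((of_int a * \<tau> + of_int b) / (of_int c * \<tau> + of_int d)) > 0"
proof -
  have det: "real_of_int a * real_of_int d - real_of_int b * real_of_int c = 1"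
    using assms(1) by (metis of_int_1 of_int_diff of_int_mult)
  show nz: "of_int c * \<tau> + of_int d \<noteq> 0"
  proof
    assume h: "of_int c * \<tau> + of_int d = 0"
    hence "Im (of_int c * \<tau> + of_int d) = 0" by simp
    hence "real_of_int c * Im \<tau> = 0" by simp
    hence "c = 0" using assms(2) by simp
    with h have "d = 0" by simp
    with \<open>c = 0\<close> assms(1) show False by simp
  qed
  define x where "x = Re \<tau>"
  define y where "y = Im \<tau>"
  have 1: "Im (of_int a * \<tau> + of_int b) = real_of_int a * y" by (simp add: y_def)
  have 2: "Re (of_int a * \<tau> + of_int b) = real_of_int a * x + real_of_int b" by (simp add: x_def)
  have 3: "Im (of_int c * \<tau> + of_int d) = real_of_int c * y" by (simp add: y_def)
  have 4: "Re (of_int c * \<tau> + of_int d) = real_of_int c * x + real_of_int d" by (simp add: x_def)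
  have 5: "real_of_int a * y * (real_of_int c * x + real_of_int d) - (real_of_int a * x + real_of_int b) * (real_of_int c * y)
     = (real_of_int a * real_of_int d - real_of_int b * real_of_int c) * y"
    by (simp add: algebra_simps)
  have "Im ((of_int a * \<tau> + of_int b) / (of_int c * \<tau> + of_int d))
     = y / (cmod (of_int c * \<tau> + of_int d))\<^sup>2"
    unfolding Im_divide' 1 2 3 4 5 det by simp
  also have "\<dots> > 0" using nz assms(2) by (simp add: y_def)
  finally show "Im ((of_int a * \<tau> + of_int b) / (of_int c * \<tau> + of_int d)) > 0" .
qed

lemma ee_add: "ee (x + y) = ee x * ee y"
  unfolding ee_def by (simp add: distrib_left exp_add)

lemma main_step:
  fixes a b c d :: int and \<tau> :: complex and s :: "rat \<times> rat"
    and \<psi> :: "complex \<Rightarrow> complex \<Rightarrow> complex"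
    and E D :: "rat \<times> rat \<Rightarrow> complex \<Rightarrow> complex"
  assumes det: "a*d - b*c = 1" and tH: "\<tau> \<in> upper_half_plane"
    and mj: "mero_jacobi N k m G S \<psi>" and gG: "(a,b,c,d) \<in> G"
    and pe: "\<And>s \<tau>. \<tau> \<in> upper_half_plane \<Longrightarrow> pole_expansion N m \<psi> s \<tau> (E s \<tau>) (D s \<tau>)"
  shows "E s (moebius (a,b,c,d) \<tau>) = (cfac (a,b,c,d) \<tau>) powi (k - 2) * E (ract s (a,b,c,d)) \<tau> \<and>
         D s (moebius (a,b,c,d) \<tau>) = (cfac (a,b,c,d) \<tau>) powi (k - 1) * D (ract s (a,b,c,d)) \<tau>"
proof -
  define g where "g = (a,b,c,d)"
  define j where "j = of_int c * \<tau> + of_int d"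
  define \<tau>' where "\<tau>' = (of_int a * \<tau> + of_int b) / j"
  have Imt: "Im \<tau> > 0" using tH by (simp add: upper_half_plane_def)
  have j0: "j \<noteq> 0" unfolding j_def using im_moebius(1)[OF det Imt] .
  have t'H: "\<tau>' \<in> upper_half_plane"
    unfolding upper_half_plane_def \<tau>'_def j_def using im_moebius(2)[OF det Imt] by simp
  have mo: "moebius g \<tau> = \<tau>'" by (simp add: moebius_def g_def \<tau>'_def j_def)
  have cf: "cfac g \<tau> = j" by (simp add: cfac_def g_def j_def)
  define cc :: complex where "cc = of_int c"
  define \<alpha> :: complex where "\<alpha> = of_rat (fst s)"
  define \<beta> :: complex where "\<beta> = of_rat (snd s)"
  define s' where "s' = ract s g"
  define \<alpha>' :: complex where "\<alpha>' = of_rat (fst s')"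
  define \<beta>' :: complex where "\<beta>' = of_rat (snd s')"
  have a'eq: "\<alpha>' = of_int a * \<alpha> + cc * \<beta>"
    by (simp add: \<alpha>'_def s'_def ract_def g_def \<alpha>_def \<beta>_def cc_def of_rat_add of_rat_mult)
  have b'eq: "\<beta>' = of_int b * \<alpha> + of_int d * \<beta>"
    by (simp add: \<beta>'_def s'_def ract_def g_def \<alpha>_def \<beta>_def of_rat_add of_rat_mult)
  define zs where "zs = zpt s \<tau>'"
  define w where "w = zpt s' \<tau>"
  have zs_eq: "zs = \<alpha> * \<tau>' + \<beta>" by (simp add: zs_def zpt_def \<alpha>_def \<beta>_def)
  have w_eq: "w = \<alpha>' * \<tau> + \<beta>'" by (simp add: w_def zpt_def \<alpha>'_def \<beta>'_def)
  have wj: "w = j * zs"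
    unfolding w_eq zs_eq a'eq b'eq \<tau>'_def using j0 by (simp add: field_simps j_def cc_def)
  have detc: "of_int a * of_int d - of_int b * cc = (1::complex)"
    unfolding cc_def by (metis det of_int_1 of_int_diff of_int_mult)
  have iden: "\<alpha> + cc * w - \<alpha>' * j = 0"
  proof -
    have "\<alpha> + cc * w - \<alpha>' * j = \<alpha> * (1 - (of_int a * of_int d - of_int b * cc))"
      unfolding w_eq a'eq b'eq j_def cc_def by (simp add: algebra_simps)
    thus ?thesis using detc by simp
  qed
  define q :: complex where "q = of_int m / of_nat N"
  define K :: complex where "K = 2 * of_real pi * \<i>"
  have K0: "K \<noteq> 0" by (simp add: K_def)
  define E1 where "E1 = E s \<tau>'"
  define D1 where "D1 = D s \<tau>'"
  define E2 where "E2 = E s' \<tau>"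
  define D2 where "D2 = D s' \<tau>"
  define B1 where "B1 = D1 - 2 * q * \<alpha> * E1"
  define B2 where "B2 = D2 - 2 * q * \<alpha>' * E2"
  define Lf where "Lf = (\<lambda>e. ee (q * \<alpha> * zs) * \<psi> \<tau>' (zs + e))"
  define Mf where "Mf = (\<lambda>e. ee (q * \<alpha>' * w) * \<psi> \<tau> (w + e))"
  obtain C1 where C1: "eventually (\<lambda>e. norm (Lf e - E1 / (K * e)\<^sup>2 - B1 / (K * e)) \<le> C1) (at 0)"
    using pe[OF t'H, of s] unfolding pole_expansion_def Let_def Lf_def q_def K_def \<alpha>_def zs_def E1_def D1_def B1_def
    by blast
  obtain C2 where C2: "eventually (\<lambda>e. norm (Mf e - E2 / (K * e)\<^sup>2 - B2 / (K * e)) \<le> C2) (at 0)"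
    using pe[OF tH, of s'] unfolding pole_expansion_def Let_def Mf_def q_def K_def \<alpha>'_def w_def E2_def D2_def B2_def
    by blast
  have law: "\<psi> \<tau>' (z / j) = j powi k * ee (q * cc * z\<^sup>2 / j) * \<psi> \<tau> z"
    if "z \<notin> poles S \<tau>" "z / j \<notin> poles S \<tau>'" for z
  proof -
    have "\<forall>g\<in>G. \<forall>\<tau>\<in>upper_half_plane. \<forall>z.
        z \<notin> poles S \<tau> \<and> z / cfac g \<tau> \<notin> poles S (moebius g \<tau>) \<longrightarrow>
        \<psi> (moebius g \<tau>) (z / cfac g \<tau>) =
          (cfac g \<tau>) powi k *
          ee (of_int m / of_nat N * (case g of (a,b,c,d) \<Rightarrow> of_int c) * z\<^sup>2 / cfac g \<tau>) *
          \<psi> \<tau> z"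
      using mj unfolding mero_jacobi_def by blast
    from this[rule_format, of g \<tau> z] gG tH that show ?thesis
      unfolding mo cf by (simp add: g_def q_def cc_def)
  qed
  define Bad where "Bad = (\<lambda>p. p - zs) ` poles S \<tau>' \<union> (\<lambda>p. (p - w) / j) ` poles S \<tau>"
  have cntS: "countable S" by (rule countable_subset[OF subset_UNIV]) simp
  have cntB: "countable Bad" unfolding Bad_def poles_def using cntS by simp
  define F where "F = at (0::complex) within (- Bad)"
  have Fnb: "F \<noteq> bot"
  proof -
    have "(0::complex) islimpt (- Bad)"
      unfolding islimpt_approachable
    proof (intro allI impI)
      fix r :: real assume r: "r > 0"
      have "ball 0 r - (Bad \<union> {0}) \<noteq> {}"
        by (rule ball_minus_countable_nonempty) (use cntB r in auto)
      then obtain x where "x \<in> ball 0 r" "x \<notin> Bad" "x \<noteq> 0" by blast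
      thus "\<exists>x'\<in>- Bad. x' \<noteq> 0 \<and> dist x' 0 < r" by (auto simp: dist_commute)
    qed
    thus ?thesis unfolding F_def using trivial_limit_within by blast
  qed
  have Fle: "F \<le> at 0" unfolding F_def by (rule at_le) simp
  have goodF: "eventually (\<lambda>e. e \<notin> Bad \<and> e \<noteq> 0) F"
    unfolding F_def eventually_at_filter by simp
  have idlim: "((\<lambda>e. e) \<longlongrightarrow> 0) F" unfolding F_def by (rule tendsto_ident_at)
  define u where "u = (\<lambda>e. ee (2 * q * cc * w * e + q * cc * j * e\<^sup>2))"
  define V where "V = K * (2 * q * cc * w)"
  have uder: "(u has_field_derivative V) (at 0)"
  proof -
    have "((\<lambda>e. exp (K * (2 * q * cc * w * e + q * cc * j * e\<^sup>2))) has_field_derivative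
            exp (K * (2 * q * cc * w * 0 + q * cc * j * 0\<^sup>2)) * (K * (2 * q * cc * w * 1 + q * cc * j * (2 * 0)))) (at 0)"
      by (rule derivative_eq_intros refl | simp)+
    moreover have "u = (\<lambda>e. exp (K * (2 * q * cc * w * e + q * cc * j * e\<^sup>2)))"
      unfolding u_def ee_def K_def by (simp add: mult.assoc)
    ultimately show ?thesis by (simp add: V_def)
  qed
  have u0: "u 0 = 1" by (simp add: u_def ee_def)
  define r where "r = (\<lambda>e. (u e - 1) / e - V)"
  have rlim: "(r \<longlongrightarrow> 0) F"
  proof -
    have "((\<lambda>e. (u e - u 0) / (e - 0)) \<longlongrightarrow> V) (at 0)"
      using uder has_field_derivative_iff by blast
    hence "((\<lambda>e. (u e - 1) / e - V) \<longlongrightarrow> V - V) (at 0)"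
      by (intro tendsto_intros) (simp add: u0)
    hence "(r \<longlongrightarrow> 0) (at 0)" by (simp add: r_def)
    thus ?thesis using Fle tendsto_mono by blast
  qed
  define Pf where "Pf = (\<lambda>e. Lf e - E1 / (K * e)\<^sup>2 - B1 / (K * e))"
  define Qf where "Qf = (\<lambda>e. Mf (j * e) - E2 / (K * (j * e))\<^sup>2 - B2 / (K * (j * e)))"
  have PfB: "eventually (\<lambda>e. norm (Pf e) \<le> C1) F"
    using filter_leD[OF Fle C1] unfolding Pf_def .
  have QfB: "eventually (\<lambda>e. norm (Qf e) \<le> C2) F"
  proof -
    have "filterlim (\<lambda>e. j * e) (at 0) (at 0)"
    proof (rule filterlim_atI)
      show "((\<lambda>e. j * e) \<longlongrightarrow> 0) (at 0)" by (rule tendsto_eq_intros refl | simp)+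
      show "eventually (\<lambda>e. j * e \<noteq> 0) (at 0)" using j0 eventually_at_filter by (simp add: eventually_at_filter)
    qed
    from eventually_compose_filterlim[OF C2 this]
    have "eventually (\<lambda>e. norm (Qf e) \<le> C2) (at 0)" unfolding Qf_def .
    thus ?thesis using filter_leD[OF Fle] by blast
  qed
  have eP: "((\<lambda>e. e * Pf e) \<longlongrightarrow> 0) F" by (rule zero_times_bounded[OF idlim PfB])
  have eQ: "((\<lambda>e. e * Qf e) \<longlongrightarrow> 0) F" by (rule zero_times_bounded[OF idlim QfB])
  define p where "p = j powi (k - 2)"
  have pk: "j powi k = p * j\<^sup>2"
  proof -
    have "j powi k = j powi ((k - 2) + 2)" by simp
    also have "\<dots> = p * j powi 2" unfolding p_def by (rule power_int_add) (use j0 in simp)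
    finally show ?thesis by simp
  qed
  have pk1: "j powi (k - 1) = p * j"
  proof -
    have "j powi (k - 1) = j powi ((k - 2) + 1)" by simp
    also have "\<dots> = p * j powi 1" unfolding p_def by (rule power_int_add) (use j0 in simp)
    finally show ?thesis by simp
  qed
  define A where "A = p * E2"
  define Bc where "Bc = p * j * B2 + p * E2 * (2 * q * cc * w)"
  define X where "X = (E1 - A) / K\<^sup>2"
  define Y where "Y = (B1 - Bc) / K"
  define Sf where "Sf = (\<lambda>e. p * j\<^sup>2 * (e * Qf e) - e * Pf e + V * e * (p * B2 * j / K + p * j\<^sup>2 * (e * Qf e))
       + r e * (p * E2 / K\<^sup>2 + p * B2 * j * e / K + p * j\<^sup>2 * e * (e * Qf e)))"
  have Slim: "(Sf \<longlongrightarrow> 0) F"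
  proof -
    have "(Sf \<longlongrightarrow> p * j\<^sup>2 * 0 - 0 + V * 0 * (p * B2 * j / K + p * j\<^sup>2 * 0)
       + 0 * (p * E2 / K\<^sup>2 + p * B2 * j * 0 / K + p * j\<^sup>2 * 0 * 0)) F"
      unfolding Sf_def using K0 by (intro tendsto_intros eP eQ rlim idlim) auto
    thus ?thesis by simp
  qed
  have rel: "X + Y * e = e * Sf e" if e: "e \<notin> Bad" "e \<noteq> 0" for e
  proof -
    have g1: "zs + e \<notin> poles S \<tau>'"
    proof
      assume "zs + e \<in> poles S \<tau>'"
      hence "(zs + e) - zs \<in> Bad" unfolding Bad_def by blast
      with e show False by simp
    qed
    have g2: "w + j * e \<notin> poles S \<tau>"
    proof
      assume "w + j * e \<in> poles S \<tau>"
      hence "((w + j * e) - w) / j \<in> Bad" unfolding Bad_def by blast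
      with e j0 show False by simp
    qed
    have zj: "(w + j * e) / j = zs + e" using wj j0 by (simp add: field_simps)
    have L1: "\<psi> \<tau>' (zs + e) = j powi k * ee (q * cc * (w + j * e)\<^sup>2 / j) * \<psi> \<tau> (w + j * e)"
      using law[of "w + j * e"] g1 g2 zj by simp
    have expo: "q * \<alpha> * zs + q * cc * (w + j * e)\<^sup>2 / j = q * \<alpha>' * w + (2 * q * cc * w * e + q * cc * j * e\<^sup>2)"
    proof -
      have "q * \<alpha> * zs + q * cc * (w + j * e)\<^sup>2 / j - (q * \<alpha>' * w + (2 * q * cc * w * e + q * cc * j * e\<^sup>2))
            = q * zs * (\<alpha> + cc * w - \<alpha>' * j)"
        unfolding wj using j0 by (simp add: field_simps power2_eq_square)
      thus ?thesis using iden by simp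
    qed
    have hrel: "Lf e = p * j\<^sup>2 * u e * Mf (j * e)"
    proof -
      have "Lf e = j powi k * (ee (q * \<alpha> * zs) * ee (q * cc * (w + j * e)\<^sup>2 / j)) * \<psi> \<tau> (w + j * e)"
        unfolding Lf_def L1 by (simp add: mult_ac)
      also have "ee (q * \<alpha> * zs) * ee (q * cc * (w + j * e)\<^sup>2 / j) = ee (q * \<alpha>' * w) * u e"
        unfolding ee_add[symmetric] expo u_def by (simp add: ee_add)
      finally show ?thesis unfolding pk Mf_def by (simp add: mult_ac)
    qed
    have hL: "Lf e = E1 / (K * e)\<^sup>2 + B1 / (K * e) + Pf e" by (simp add: Pf_def)
    have hM: "Mf (j * e) = E2 / (K * (j * e))\<^sup>2 + B2 / (K * (j * e)) + Qf e" by (simp add: Qf_def)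
    have hu: "u e = 1 + V * e + e * r e" using e by (simp add: r_def field_simps)
    have eq: "E1 / (K * e)\<^sup>2 + B1 / (K * e) + Pf e
       = p * j\<^sup>2 * (1 + V * e + e * r e) * (E2 / (K * (j * e))\<^sup>2 + B2 / (K * (j * e)) + Qf e)"
      using hrel unfolding hL hM hu .
    have "X + Y * e - e * Sf e = e\<^sup>2 * ((E1 / (K * e)\<^sup>2 + B1 / (K * e) + Pf e)
       - p * j\<^sup>2 * (1 + V * e + e * r e) * (E2 / (K * (j * e))\<^sup>2 + B2 / (K * (j * e)) + Qf e))"
      unfolding X_def Y_def Sf_def A_def Bc_def V_def using K0 j0 e
      by (simp add: field_simps power2_eq_square)
    also have "\<dots> = 0" using eq by simp
    finally show ?thesis by simp
  qed
  have "X = 0 \<and> Y = 0"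
  proof (rule key_lin[OF Fnb _ Slim idlim])
    show "eventually (\<lambda>e. e \<noteq> 0 \<and> X + Y * e = e * Sf e) F"
      using goodF by eventually_elim (use rel in auto)
  qed
  hence hE: "E1 = p * E2" and hB: "B1 = Bc" using K0 by (auto simp: X_def Y_def A_def)
  have hD: "D1 = p * j * D2"
  proof -
    have "D1 = B1 + 2 * q * \<alpha> * E1" by (simp add: B1_def)
    also have "\<dots> = p * j * D2 + 2 * q * p * E2 * (\<alpha> + cc * w - \<alpha>' * j)"
      unfolding hB hE Bc_def B2_def by (simp add: algebra_simps)
    finally show ?thesis using iden by simp
  qed
  show ?thesis
    using hE hD pk1
    by (simp add: E1_def D1_def E2_def D2_def p_def mo[unfolded g_def] cf[unfolded g_def] s'_def g_def)
qed

theorem proposition4p6: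
  fixes N :: nat and k :: int and m :: int
    and G :: "(int \<times> int \<times> int \<times> int) set"
    and S :: "(rat \<times> rat) set"
    and \<psi> :: "complex \<Rightarrow> complex \<Rightarrow> complex"
    and E D :: "rat \<times> rat \<Rightarrow> complex \<Rightarrow> complex"
  assumes "N \<ge> 1" and "m > 0"
    and "G = Gamma0 N \<or> G = Gamma1 N"
    and "mero_jacobi N k m G S \<psi>"
    and "\<And>s \<tau>. \<tau> \<in> upper_half_plane \<Longrightarrow> pole_expansion N m \<psi> s \<tau> (E s \<tau>) (D s \<tau>)"
  shows "\<forall>g\<in>G. \<forall>\<tau>\<in>upper_half_plane. \<forall>s\<in>S.
           E s (moebius g \<tau>) = (cfac g \<tau>) powi (k - 2) * E (ract s g) \<tau> \<and>
           D s (moebius g \<tau>) = (cfac g \<tau>) powi (k - 1) * D (ract s g) \<tau>"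
proof (intro ballI)
  fix g \<tau> s
  assume gG: "g \<in> G" and tH: "\<tau> \<in> upper_half_plane" and "s \<in> S"
  obtain a b c d where gd: "g = (a,b,c,d)" by (cases g) auto
  have det: "a*d - b*c = 1"
    using assms(3) gG unfolding gd Gamma0_def Gamma1_def by auto
  show "E s (moebius g \<tau>) = (cfac g \<tau>) powi (k - 2) * E (ract s g) \<tau> \<and>
        D s (moebius g \<tau>) = (cfac g \<tau>) powi (k - 1) * D (ract s g) \<tau>"
    unfolding gd by (rule main_step[OF det tH assms(4) gG[unfolded gd] assms(5)])
qed

end
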